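(* Let $F=F_+\tilde{*}F_-$ be a twisted plumbing along $U$ with defect $m\ge1$, with pinch points $x=\{x_1,\dots,x_m\}$. Suppose every component $U_0$ of $(U\cap Q)\setminus x$, having $k$ points of $x$ on its boundary, satisfies: $|\partial U_0\cap L|\equiv k\pmod 2$; $|\partial U_0\cap L|\ge 3$ if $k=1$; and $|\partial U_0\cap L|\ge 2$ if $k=2$. Then $|\partial U\cap L|\ge 2m+4$.
   Context: Let $F$ be a spanning surface for a link $L\subset S^3$ (compact surface, orientable or not, no closed components, $\partial F=L$). Twisted plumbing: let $Q\subset S^3$ be a 2-sphere with regular neighborhood $\nu Q\cong Q\times[-1,1]$, $Q=Q\times\{0\}$, projection $\pi_Q:\nu Q\to Q$. Let $H_\pm$ be the components of $S^3\setminus\nu Q$, $B_\pm=H_\pm\cup\nu Q$, $F_\pm=F\cap B_\pm$, and $U=F\cap\nu Q$. Isotope $F$ near $U$ so that for each $y\in Q$ the fiber $\pi_Q^{-1}(y)$ either meets $F$ transversely or meets $F$ in a properly embedded arc of $F$, minimizing the number $m$ of points $x_1,\dots,x_m\in Q$ over which the fiber is not transverse to $U$; then, fixing $F\cap\pi_Q^{-1}(x)$, isotope $F$ near $U$ so that $U\cap Q$ is a pinched disk whose pinch points are $x=\{x_1,\dots,x_m\}$. Then $F=F_+\tilde{*}F_-$ is a twisted plumbing along $U$ with defect $m$; $Q$ cut along $U\cap Q$ is the twisted plumbing cap $V$, and $U$ (identified with $U\cap Q$) is its shadow; $\partial U\cap L$ means the points of $L$ on the boundary of the pinched disk $U\cap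 Q$. *)

theory Defs
  imports "HOL-Analysis.Analysis"
begin

text \<open>The plumbing sphere Q minus a point outside U is identified with the plane.\<close>

definition pinched_disk :: "(real^2) set \<Rightarrow> (real^2) set \<Rightarrow> bool" where
  "pinched_disk P X \<longleftrightarrow>
     compact P \<and> connected P \<and> simply_connected P \<and> finite X \<and> X \<subseteq> P \<and>
     finite (components (P - X)) \<and>
     (\<forall>c\<in>components (P - X).
         closure c homeomorphic cball (0::real^2) 1 \<and> closure c \<inter> X \<subseteq> frontier (closure c)) \<and>
     (\<forall>c\<in>components (P - X). \<forall>d\<in>components (P - X).
         c \<noteq> d \<longrightarrow> closure c \<inter> closure d \<subseteq> X) \<and>
     (\<forall>x\<in>X. card {c\<in>components (P - X). x \<in> closure c} = 2)"

end

theory Submission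
  imports Defs
begin


lemma connected_union_hub:
  fixes T :: "'a::topological_space set"
  assumes "connected T" "T \<noteq> {}" "\<And>s. s \<in> F \<Longrightarrow> connected s \<and> s \<inter> T \<noteq> {}"
  shows "connected (T \<union> \<Union>F)"
proof -
  have "connected (\<Union>(insert T ((\<lambda>s. s \<union> T) ` F)))"
    apply (rule connected_Union)
    using assms connected_Un apply blast
    using assms(2) by blast
  moreover have "\<Union>(insert T ((\<lambda>s. s \<union> T) ` F)) = T \<union> \<Union>F" by blast
  ultimately show ?thesis by simp
qed

lemma nc_lemma:
  fixes D :: "'i \<Rightarrow> 'a::topological_space set"
  assumes "finite C" "\<forall>c\<in>C. closed (D c) \<and> connected (D c) \<and> D c \<noteq> {}"
    "connected (\<Union>(D`C))" "u\<in>C" "card C \<ge> 2"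
  shows "\<exists>z\<in>C. z\<noteq>u \<and> connected (\<Union>(D`(C-{z})))"
  using assms
proof (induction "card C" arbitrary: C u rule: less_induct)
  case less
  note fin = less.prems(1) and DC = less.prems(2) and conn = less.prems(3)
  have "\<exists>w\<in>C. w \<noteq> u"
  proof (rule ccontr)
    assume "\<not> (\<exists>w\<in>C. w \<noteq> u)"
    then have "C \<subseteq> {u}" by blast
    then have "card C \<le> 1" using card_mono[of "{u}" C] by simp
    then show False using less.prems(5) by simp
  qed
  then obtain w where w: "w \<in> C" "w \<noteq> u" by blast
  show ?case
  proof (cases "connected (\<Union>(D`(C-{w})))")
    case True then show ?thesis using w by blast
  next
    case False
    define Y where "Y = \<Union>(D`(C-{w}))"
    have clY: "closed Y" unfolding Y_def using fin DC by (intro closed_Union) auto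
    have split: "\<And>c y. c \<in> C - {w} \<Longrightarrow> y \<in> Y \<Longrightarrow> D c \<subseteq> connected_component_set Y y \<or> D c \<inter> connected_component_set Y y = {}"
    proof -
      fix c y assume c: "c \<in> C - {w}" and y: "y \<in> Y"
      show "D c \<subseteq> connected_component_set Y y \<or> D c \<inter> connected_component_set Y y = {}"
      proof (cases "D c \<inter> connected_component_set Y y = {}")
        case False
        then obtain p where p: "p \<in> D c" "p \<in> connected_component_set Y y" by blast
        have "D c \<subseteq> connected_component_set Y p"
          by (rule connected_component_maximal) (use p c DC Y_def in auto)
        then show ?thesis using connected_component_eq[OF p(2)] by simp
      qed simp
    qed
    have compK: "\<And>y. y \<in> Y \<Longrightarrow> connected_component_set Y y = \<Union>(D ` {c\<in>C-{w}. D c \<subseteq> connected_component_set Y y})"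
    proof -
      fix y assume y: "y \<in> Y"
      show "connected_component_set Y y = \<Union>(D ` {c\<in>C-{w}. D c \<subseteq> connected_component_set Y y})"
      proof
        show "connected_component_set Y y \<subseteq> \<Union>(D ` {c\<in>C-{w}. D c \<subseteq> connected_component_set Y y})"
        proof
          fix q assume q: "q \<in> connected_component_set Y y"
          then have "q \<in> Y" using connected_component_subset by blast
          then obtain c where c: "c \<in> C - {w}" "q \<in> D c" unfolding Y_def by blast
          then have "D c \<subseteq> connected_component_set Y y" using split[OF c(1) y] q by blast
          then show "q \<in> \<Union>(D ` {c\<in>C-{w}. D c \<subseteq> connected_component_set Y y})" using c by blast
        qed
      qed blast
    qed
    have meetw: "\<And>y. y \<in> Y \<Longrightarrow> connected_component_set Y y \<inter> D w \<noteq> {}"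
    proof -
      fix y assume y: "y \<in> Y"
      define K where "K = {c\<in>C-{w}. D c \<subseteq> connected_component_set Y y}"
      define R where "R = D w \<union> \<Union>(D ` (C - {w} - K))"
      have "\<Union>(D`C) = connected_component_set Y y \<union> R"
        using compK[OF y] w(1) unfolding R_def K_def by blast
      moreover have "closed (connected_component_set Y y)" using clY closed_connected_component by blast
      moreover have "closed R" unfolding R_def using fin DC w by (intro closed_Un closed_Union) auto
      moreover have "connected_component_set Y y \<noteq> {}" using y connected_component_eq_empty by metis
      moreover have "R \<noteq> {}" unfolding R_def using DC w by auto
      ultimately have "connected_component_set Y y \<inter> R \<noteq> {}"
        using connected_as_closed_union[OF conn] by blast
      moreover have "connected_component_set Y y \<inter> \<Union>(D ` (C - {w} - K)) = {}"
        using split y unfolding K_def by blast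
      ultimately show "connected_component_set Y y \<inter> D w \<noteq> {}" unfolding R_def by blast
    qed
    obtain pu where pu: "pu \<in> D u" using DC less.prems(4) by blast
    have puY: "pu \<in> Y" using pu w less.prems(4) unfolding Y_def by blast
    have "Y \<noteq> connected_component_set Y pu" using False Y_def by (metis connected_connected_component)
    then obtain q where q: "q \<in> Y" "q \<notin> connected_component_set Y pu"
      using connected_component_subset by blast
    define Comp where "Comp = connected_component_set Y q"
    define K where "K = {c\<in>C-{w}. D c \<subseteq> Comp}"
    have CompK: "Comp = \<Union>(D ` K)" using compK[OF q(1)] unfolding Comp_def K_def .
    have uK: "u \<notin> K"
    proof
      assume "u \<in> K"
      then have "pu \<in> Comp" using pu K_def by blast
      then show False using q(2) Comp_def connected_component_eq connected_component_sym
        by (metis mem_Collect_eq)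
    qed
    obtain c0 where c0: "c0 \<in> K" using CompK q(1) Comp_def
      by (metis (no_types, lifting) SUP_bot_conv(2) connected_component_eq_empty ex_in_conv)
    define C' where "C' = insert w K"
    have C'C: "C' \<subseteq> C" unfolding C'_def K_def using w by auto
    have ltC: "card C' < card C"
      proof (rule psubset_card_mono[OF fin])
      show "C' \<subset> C" using C'C uK less.prems(4) w(2) unfolding C'_def by blast
    qed
    have finC': "finite C'" using C'C fin finite_subset by blast
    have wK: "w \<notin> K" unfolding K_def by blast
    have card2: "card C' \<ge> 2" proof -
      have "{w, c0} \<subseteq> C'" using c0 C'_def by blast
      then have "card {w, c0} \<le> card C'" using finC' card_mono by blast
      moreover have "w \<noteq> c0" using c0 wK by blast
      then have "card {w, c0} = 2" by simp
      ultimately show ?thesis by simp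
    qed
    have conC': "connected (\<Union>(D`C'))"
    proof -
      have "\<Union>(D`C') = D w \<union> Comp" unfolding C'_def CompK by blast
      moreover have "connected Comp" unfolding Comp_def by simp
      moreover have "Comp \<inter> D w \<noteq> {}" using meetw[OF q(1)] Comp_def by simp
      ultimately show ?thesis using DC w connected_Un by (metis inf_commute)
    qed
    obtain z where z: "z \<in> C'" "z \<noteq> w" "connected (\<Union>(D`(C'-{z})))"
      using less.hyps[OF ltC finC' _ conC' _ card2, of w] DC C'C C'_def by blast
    have zK: "z \<in> K" using z C'_def by blast
    define F where "F = (\<lambda>c. connected_component_set Y (SOME p. p \<in> D c)) ` (C - {w} - K)"
    have eq: "\<Union>(D`(C-{z})) = \<Union>(D`(C'-{z})) \<union> \<Union>F"
    proof
      show "\<Union>(D`(C-{z})) \<subseteq> \<Union>(D`(C'-{z})) \<union> \<Union>F"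
      proof
        fix y assume "y \<in> \<Union>(D`(C-{z}))"
        then obtain c where c: "c \<in> C - {z}" "y \<in> D c" by blast
        show "y \<in> \<Union>(D`(C'-{z})) \<union> \<Union>F"
        proof (cases "c \<in> C'")
          case True then show ?thesis using c by blast
        next
          case False
          then have cc: "c \<in> C - {w} - K" using c C'_def by blast
          have sp: "(SOME p. p \<in> D c) \<in> D c" using DC cc by (simp add: some_in_eq)
          have "D c \<subseteq> connected_component_set Y (SOME p. p \<in> D c)"
            by (rule connected_component_maximal) (use sp cc DC Y_def in auto)
          then show ?thesis using c cc F_def by blast
        qed
      qed
    next
      show "\<Union>(D`(C'-{z})) \<union> \<Union>F \<subseteq> \<Union>(D`(C-{z}))"
      proof -
        have "\<Union>(D`(C'-{z})) \<subseteq> \<Union>(D`(C-{z}))" using C'C by blast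
        moreover have "\<Union>F \<subseteq> \<Union>(D`(C-{z}))"
        proof
          fix y assume "y \<in> \<Union>F"
          then obtain c where cc: "c \<in> C - {w} - K" and y: "y \<in> connected_component_set Y (SOME p. p \<in> D c)"
            unfolding F_def by blast
          have sp: "(SOME p. p \<in> D c) \<in> D c" using DC cc by (simp add: some_in_eq)
          have spY: "(SOME p. p \<in> D c) \<in> Y" using sp cc Y_def by blast
          have "y \<in> Y" using y connected_component_subset by blast
          then obtain d where d: "d \<in> C - {w}" "y \<in> D d" unfolding Y_def by blast
          have "d \<notin> K"
          proof
            assume "d \<in> K"
            then have "y \<in> Comp" using d K_def by blast
            then have "connected_component_set Y y = Comp" unfolding Comp_def using connected_component_eq by blast
            moreover have "connected_component_set Y y = connected_component_set Y (SOME p. p \<in> D c)"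
              using y connected_component_eq by blast
            moreover have "D c \<subseteq> connected_component_set Y (SOME p. p \<in> D c)"
              by (rule connected_component_maximal) (use sp cc DC Y_def in auto)
            ultimately have "D c \<subseteq> Comp" by simp
            then show False using cc K_def by blast
          qed
          then show "y \<in> \<Union>(D`(C-{z}))" using d zK by blast
        qed
        ultimately show ?thesis by blast
      qed
    qed
    have "connected (\<Union>(D`(C'-{z})) \<union> \<Union>F)"
    proof (rule connected_union_hub)
      show "connected (\<Union>(D`(C'-{z})))" by (rule z(3))
      show "\<Union>(D`(C'-{z})) \<noteq> {}" using z DC C'_def w(1) by blast
      fix s assume "s \<in> F"
      then obtain c where cc: "c \<in> C - {w} - K" and s: "s = connected_component_set Y (SOME p. p \<in> D c)"
        unfolding F_def by blast
      have sp: "(SOME p. p \<in> D c) \<in> D c" using DC cc by (simp add: some_in_eq)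
      have spY: "(SOME p. p \<in> D c) \<in> Y" using sp cc Y_def by blast
      have "D w \<subseteq> \<Union>(D`(C'-{z}))" using z C'_def by blast
      then show "connected s \<and> s \<inter> \<Union>(D`(C'-{z})) \<noteq> {}" using meetw[OF spY] s by auto
    qed
    then show ?thesis using eq zK K_def uK z by (metis Diff_iff C'C z(1) subsetD less.prems(4) mem_Collect_eq)
  qed
qed


lemma tree_count:
  fixes D :: "'i \<Rightarrow> 'a::topological_space set" and X :: "'a set"
  assumes "finite V" "\<forall>c\<in>V. closed (D c) \<and> connected (D c) \<and> D c \<noteq> {}"
    "connected (\<Union>(D`V))" "V \<noteq> {}"
    "\<forall>c\<in>V. \<forall>d\<in>V. c \<noteq> d \<longrightarrow> D c \<inter> D d \<subseteq> X" "finite X"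
    "\<forall>K. K \<subseteq> V \<and> K \<noteq> {} \<and> K \<noteq> V \<and> connected (\<Union>(D`K)) \<and> connected (\<Union>(D`(V-K)))
        \<longrightarrow> card (\<Union>(D`K) \<inter> \<Union>(D`(V-K))) \<le> 1"
  shows "card {x\<in>X. \<exists>c\<in>V. \<exists>d\<in>V. c \<noteq> d \<and> x \<in> D c \<and> x \<in> D d} + 1 \<le> card V"
  using assms
proof (induction "card V" arbitrary: V rule: less_induct)
  case less
  note fin = less.prems(1) and DC = less.prems(2) and conn = less.prems(3) and ne = less.prems(4)
    and meet = less.prems(5) and finX = less.prems(6) and Q = less.prems(7)
  have subX: "\<And>A B. A \<subseteq> V \<Longrightarrow> B \<subseteq> V \<Longrightarrow> A \<inter> B = {} \<Longrightarrow> \<Union>(D`A) \<inter> \<Union>(D`B) \<subseteq> X"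
  proof
    fix A B x assume AB: "A \<subseteq> V" "B \<subseteq> V" "A \<inter> B = {}" and x: "x \<in> \<Union>(D`A) \<inter> \<Union>(D`B)"
    then obtain a b where ab: "a \<in> A" "b \<in> B" "x \<in> D a" "x \<in> D b" by blast
    then have "a \<noteq> b" using AB by blast
    then show "x \<in> X" using meet ab AB by blast
  qed
  show ?case
  proof (cases "card V \<ge> 2")
    case False
    have "card V \<noteq> 0" using ne fin by simp
    then have "card V = 1" using False by linarith
    then obtain c where "V = {c}" using card_1_singletonE by blast
    then have e: "{x\<in>X. \<exists>c\<in>V. \<exists>d\<in>V. c \<noteq> d \<and> x \<in> D c \<and> x \<in> D d} = {}" by auto
    show ?thesis unfolding e using \<open>card V = 1\<close> by simp
  next
    case True
    obtain u where u: "u \<in> V" using ne by blast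
    obtain z where z: "z \<in> V" "connected (\<Union>(D`(V-{z})))"
      using nc_lemma[OF fin DC conn u True] by blast
    define V' where "V' = V - {z}"
    have finV': "finite V'" using fin V'_def by simp
    have cardV': "card V' = card V - 1" using z fin V'_def by simp
    have neV': "V' \<noteq> {}" proof
      assume "V' = {}" then have "card V' = 0" by simp
      then show False using cardV' True by linarith
    qed
    have SV: "\<Union>(D`V) = D z \<union> \<Union>(D`V')" using z V'_def by blast
    have "D z \<inter> \<Union>(D`V') \<noteq> {}"
    proof (rule connected_as_closed_union[OF conn SV])
      show "closed (D z)" using DC z by blast
      show "closed (\<Union>(D`V'))" using finV' DC V'_def by (intro closed_Union) auto
      show "D z \<noteq> {}" using DC z by blast
      show "\<Union>(D`V') \<noteq> {}" using neV' DC V'_def by blast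
    qed
    then obtain p d where pd: "p \<in> D z" "d \<in> V'" "p \<in> D d" by blast
    have cutz: "card (D z \<inter> \<Union>(D`V')) \<le> 1"
    proof -
      have "card (\<Union>(D`{z}) \<inter> \<Union>(D`(V-{z}))) \<le> 1"
        proof (rule Q[rule_format])
        have "V \<noteq> {z}" using True by auto
        then show "{z} \<subseteq> V \<and> {z} \<noteq> {} \<and> {z} \<noteq> V \<and> connected (\<Union>(D`{z})) \<and> connected (\<Union>(D`(V-{z})))"
          using z DC by auto
      qed
      then show ?thesis using V'_def by simp
    qed
    have Q': "\<forall>K. K \<subseteq> V' \<and> K \<noteq> {} \<and> K \<noteq> V' \<and> connected (\<Union>(D`K)) \<and> connected (\<Union>(D`(V'-K)))
        \<longrightarrow> card (\<Union>(D`K) \<inter> \<Union>(D`(V'-K))) \<le> 1"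
    proof (intro allI impI)
      fix K assume K: "K \<subseteq> V' \<and> K \<noteq> {} \<and> K \<noteq> V' \<and> connected (\<Union>(D`K)) \<and> connected (\<Union>(D`(V'-K)))"
      have Kz: "z \<notin> K" using K V'_def by blast
      show "card (\<Union>(D`K) \<inter> \<Union>(D`(V'-K))) \<le> 1"
      proof (cases "d \<in> K")
        case True
        define K1 where "K1 = insert z K"
        have e1: "V - K1 = V' - K" using K1_def V'_def by blast
        have c1: "connected (\<Union>(D`K1))"
        proof -
          have "\<Union>(D`K1) = D z \<union> \<Union>(D`K)" using K1_def by blast
          moreover have "D z \<inter> \<Union>(D`K) \<noteq> {}" using pd True by blast
          moreover have "connected (D z)" using DC z by blast
          ultimately show ?thesis using connected_Un K by metis
        qed
        have h1: "card (\<Union>(D`K1) \<inter> \<Union>(D`(V-K1))) \<le> 1"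
          proof (rule Q[rule_format])
          have "K1 \<subseteq> V" using K z K1_def V'_def by blast
          moreover have "K1 \<noteq> V" using e1 K by blast
          ultimately show "K1 \<subseteq> V \<and> K1 \<noteq> {} \<and> K1 \<noteq> V \<and> connected (\<Union>(D`K1)) \<and> connected (\<Union>(D`(V-K1)))"
            using c1 K e1 K1_def by simp
        qed
        have h2: "finite (\<Union>(D`K1) \<inter> \<Union>(D`(V-K1)))"
          proof (rule finite_subset[OF subX finX])
          show "K1 \<subseteq> V" using K z K1_def V'_def by blast
        qed auto
        have h3: "\<Union>(D`K) \<inter> \<Union>(D`(V'-K)) \<subseteq> \<Union>(D`K1) \<inter> \<Union>(D`(V-K1))"
        proof -
          have "\<Union>(D`K) \<subseteq> \<Union>(D`K1)" unfolding K1_def by (rule Union_mono) blast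
          then show ?thesis unfolding e1 by (rule Int_mono) simp
        qed
        show ?thesis using card_mono[OF h2 h3] h1 by linarith
      next
        case False
        have e2: "V - K = insert z (V' - K)" using K V'_def z by blast
        have c2: "connected (\<Union>(D`(V-K)))"
        proof -
          have "\<Union>(D`(V-K)) = D z \<union> \<Union>(D`(V'-K))" unfolding e2 by simp
          moreover have "D z \<inter> \<Union>(D`(V'-K)) \<noteq> {}" using pd False by blast
          moreover have "connected (D z)" using DC z by blast
          ultimately show ?thesis using connected_Un K by metis
        qed
        have h1: "card (\<Union>(D`K) \<inter> \<Union>(D`(V-K))) \<le> 1"
          proof (rule Q[rule_format])
          have "K \<subseteq> V" using K V'_def by blast
          moreover have "K \<noteq> V" using Kz z by blast
          ultimately show "K \<subseteq> V \<and> K \<noteq> {} \<and> K \<noteq> V \<and> connected (\<Union>(D`K)) \<and> connected (\<Union>(D`(V-K)))"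
            using c2 K by simp
        qed
        have h2: "finite (\<Union>(D`K) \<inter> \<Union>(D`(V-K)))"
          proof (rule finite_subset[OF subX finX])
          show "K \<subseteq> V" using K V'_def by blast
        qed auto
        have h3: "\<Union>(D`K) \<inter> \<Union>(D`(V'-K)) \<subseteq> \<Union>(D`K) \<inter> \<Union>(D`(V-K))"
          unfolding e2 by (rule Int_mono) auto
        show ?thesis using card_mono[OF h2 h3] h1 by linarith
      qed
    qed
    have IH: "card {x\<in>X. \<exists>c\<in>V'. \<exists>d\<in>V'. c \<noteq> d \<and> x \<in> D c \<and> x \<in> D d} + 1 \<le> card V'"
    proof -
      have lt: "card V' < card V" using cardV' True by simp
      have DC': "\<forall>c\<in>V'. closed (D c) \<and> connected (D c) \<and> D c \<noteq> {}" using DC V'_def by blast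
      have conn': "connected (\<Union>(D`V'))" using z V'_def by simp
      have meet': "\<forall>c\<in>V'. \<forall>d\<in>V'. c \<noteq> d \<longrightarrow> D c \<inter> D d \<subseteq> X" using meet V'_def by blast
      show ?thesis using less.hyps[OF lt finV' DC' conn' neV' meet' finX Q'] .
    qed
    have sub: "{x\<in>X. \<exists>c\<in>V. \<exists>d\<in>V. c \<noteq> d \<and> x \<in> D c \<and> x \<in> D d}
       \<subseteq> {x\<in>X. \<exists>c\<in>V'. \<exists>d\<in>V'. c \<noteq> d \<and> x \<in> D c \<and> x \<in> D d} \<union> (D z \<inter> \<Union>(D`V'))"
    proof
      fix x assume "x \<in> {x\<in>X. \<exists>c\<in>V. \<exists>d\<in>V. c \<noteq> d \<and> x \<in> D c \<and> x \<in> D d}"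
      then obtain c d where cd: "x \<in> X" "c \<in> V" "d \<in> V" "c \<noteq> d" "x \<in> D c" "x \<in> D d" by blast
      show "x \<in> {x\<in>X. \<exists>c\<in>V'. \<exists>d\<in>V'. c \<noteq> d \<and> x \<in> D c \<and> x \<in> D d} \<union> (D z \<inter> \<Union>(D`V'))"
      proof (cases "c = z")
        case True then show ?thesis using cd V'_def by blast
      next
        case F1: False
        show ?thesis
        proof (cases "d = z")
          case True then show ?thesis using cd F1 V'_def by blast
        next
          case False then show ?thesis using cd F1 V'_def by blast
        qed
      qed
    qed
    have "card {x\<in>X. \<exists>c\<in>V. \<exists>d\<in>V. c \<noteq> d \<and> x \<in> D c \<and> x \<in> D d}
       \<le> card ({x\<in>X. \<exists>c\<in>V'. \<exists>d\<in>V'. c \<noteq> d \<and> x \<in> D c \<and> x \<in> D d} \<union> (D z \<inter> \<Union>(D`V')))"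
    proof (rule card_mono[OF _ sub])
      have "D z \<inter> \<Union>(D`V') \<subseteq> X" using meet z V'_def by blast
      then have "finite (D z \<inter> \<Union>(D`V'))" using finX by (rule finite_subset)
      then show "finite ({x\<in>X. \<exists>c\<in>V'. \<exists>d\<in>V'. c \<noteq> d \<and> x \<in> D c \<and> x \<in> D d} \<union> (D z \<inter> \<Union>(D`V')))"
        using finX by simp
    qed
    also have "\<dots> \<le> card {x\<in>X. \<exists>c\<in>V'. \<exists>d\<in>V'. c \<noteq> d \<and> x \<in> D c \<and> x \<in> D d} + card (D z \<inter> \<Union>(D`V'))"
      by (rule card_Un_le)
    finally show ?thesis using IH cutz cardV' True by linarith
  qed
qed



lemma lpc_Un:
  fixes S T :: "'a::real_normed_vector set"
  assumes "locally path_connected S" "locally path_connected T" "closed S" "closed T"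
  shows "locally path_connected (S \<union> T)"
  unfolding locally_def
proof (intro allI impI)
  fix w x assume wx: "openin (top_of_set (S \<union> T)) w \<and> x \<in> w"
  then obtain W where W: "open W" "w = (S \<union> T) \<inter> W" using openin_open by blast
  have part: "\<And>A. locally path_connected A \<Longrightarrow> closed A \<Longrightarrow> A \<subseteq> S \<union> T \<Longrightarrow>
     \<exists>Oc V. open Oc \<and> x \<in> Oc \<and> path_connected V \<and> x \<in> V \<and> V \<subseteq> w \<and> A \<inter> Oc \<subseteq> V"
  proof -
    fix A :: "'a set" assume A: "locally path_connected A" "closed A" "A \<subseteq> S \<union> T"
    show "\<exists>Oc V. open Oc \<and> x \<in> Oc \<and> path_connected V \<and> x \<in> V \<and> V \<subseteq> w \<and> A \<inter> Oc \<subseteq> V"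
    proof (cases "x \<in> A")
      case True
      have "openin (top_of_set A) (A \<inter> W)" using W(1) openin_open by blast
      then obtain U V where UV: "openin (top_of_set A) U" "path_connected V" "x \<in> U" "U \<subseteq> V" "V \<subseteq> A \<inter> W"
        using A(1)[unfolded locally_def, rule_format, of "A \<inter> W" x] True wx W by blast
      obtain Oc where Oc: "open Oc" "U = A \<inter> Oc" using UV(1) openin_open by blast
      show ?thesis
      proof (intro exI conjI)
        show "open Oc" by (rule Oc(1))
        show "x \<in> Oc" using UV Oc by blast
        show "path_connected V" by (rule UV(2))
        show "x \<in> V" using UV by blast
        show "V \<subseteq> w" using UV A W by blast
        show "A \<inter> Oc \<subseteq> V" using UV Oc by blast
      qed
    next
      case False
      show ?thesis
      proof (intro exI conjI)
        show "open (- A)" using A(2) by (simp add: open_Compl)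
        show "x \<in> - A" using False by simp
        show "path_connected {x}" by simp
        show "x \<in> {x}" by simp
        show "{x} \<subseteq> w" using wx by simp
        show "A \<inter> - A \<subseteq> {x}" by simp
      qed
    qed
  qed
  obtain Oa V1 where 1: "open Oa" "x \<in> Oa" "path_connected V1" "x \<in> V1" "V1 \<subseteq> w" "S \<inter> Oa \<subseteq> V1"
    using part[OF assms(1) assms(3)] by blast
  obtain Ob V2 where 2: "open Ob" "x \<in> Ob" "path_connected V2" "x \<in> V2" "V2 \<subseteq> w" "T \<inter> Ob \<subseteq> V2"
    using part[OF assms(2) assms(4)] by blast
  show "\<exists>U V. openin (top_of_set (S \<union> T)) U \<and> path_connected V \<and> x \<in> U \<and> U \<subseteq> V \<and> V \<subseteq> w"
  proof (intro exI conjI)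
    show "openin (top_of_set (S \<union> T)) ((S \<union> T) \<inter> (Oa \<inter> Ob))"
      using 1 2 openin_open by blast
    show "path_connected (V1 \<union> V2)" using 1 2 path_connected_Un by blast
    show "x \<in> (S \<union> T) \<inter> (Oa \<inter> Ob)" using 1 2 wx W by blast
    show "(S \<union> T) \<inter> (Oa \<inter> Ob) \<subseteq> V1 \<union> V2" using 1 2 by blast
    show "V1 \<union> V2 \<subseteq> w" using 1 2 by blast
  qed
qed

lemma lpc_Union:
  fixes D :: "'i \<Rightarrow> 'a::real_normed_vector set"
  assumes "finite A" "\<forall>c\<in>A. locally path_connected (D c) \<and> closed (D c)"
  shows "locally path_connected (\<Union>(D`A))"
  using assms
proof (induction A rule: finite_induct)
  case empty then show ?case by simp
next
  case (insert a A)
  have "\<Union>(D`insert a A) = D a \<union> \<Union>(D`A)" by simp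
  moreover have "closed (\<Union>(D`A))" using insert by (intro closed_Union) auto
  ultimately show ?case using lpc_Un[of "D a" "\<Union>(D`A)"] insert by auto
qed

lemma lpc_disk:
  fixes S :: "(real^2) set"
  assumes "S homeomorphic cball (0::real^2) 1"
  shows "locally path_connected S"
proof -
  have "locally path_connected (cball (0::real^2) 1)"
    by (rule convex_imp_locally_path_connected) simp
  then show ?thesis using homeomorphic_locally[OF assms] homeomorphic_path_connectedness by blast
qed



theorem proposition7p1:
  fixes P X L :: "(real^2) set" and m :: nat
  assumes "pinched_disk P X"
    and "card X = m" and "m \<ge> 1"
    and "finite L"
    and "L \<inter> P \<subseteq> frontier P - X"
    and "\<forall>U0\<in>components (P - X).
           card (L \<inter> frontier (closure U0)) mod 2 = card (X \<inter> closure U0) mod 2 \<and>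
           (card (X \<inter> closure U0) = 1 \<longrightarrow> card (L \<inter> frontier (closure U0)) \<ge> 3) \<and>
           (card (X \<inter> closure U0) = 2 \<longrightarrow> card (L \<inter> frontier (closure U0)) \<ge> 2)"
  shows "card (L \<inter> P) \<ge> 2 * m + 4"
proof -
  define C where "C = components (P - X)"
  note pd = assms(1)[unfolded pinched_disk_def]
  have cpt: "compact P" and conP: "connected P" and scP: "simply_connected P" and finX: "finite X"
    and XP: "X \<subseteq> P" and finC: "finite C"
    and homC: "\<forall>c\<in>C. closure c homeomorphic cball (0::real^2) 1"
    and meet: "\<forall>c\<in>C. \<forall>d\<in>C. c \<noteq> d \<longrightarrow> closure c \<inter> closure d \<subseteq> X"
    and two: "\<forall>x\<in>X. card {c\<in>C. x \<in> closure c} = 2"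
    using pd unfolding C_def by auto
  have clP: "closed P" using cpt compact_imp_closed by blast
  have cP: "\<And>c. c \<in> C \<Longrightarrow> closure c \<subseteq> P"
  proof -
    fix c assume "c \<in> C"
    then have "c \<subseteq> P" unfolding C_def using in_components_subset by blast
    then show "closure c \<subseteq> P" using clP closure_minimal by blast
  qed
  have DC: "\<forall>c\<in>C. closed (closure c) \<and> connected (closure c) \<and> closure c \<noteq> {}"
    unfolding C_def using in_components_connected in_components_nonempty connected_imp_connected_closure
    by (metis closed_closure closure_eq_empty)
  have two': "\<And>x. x \<in> X \<Longrightarrow> \<exists>c\<in>C. \<exists>d\<in>C. c \<noteq> d \<and> x \<in> closure c \<and> x \<in> closure d"
  proof -
    fix x assume "x \<in> X"
    then have "card {c\<in>C. x \<in> closure c} = 2" using two by blast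
    then obtain c d where "{c\<in>C. x \<in> closure c} = {c, d}" "c \<noteq> d" by (metis card_2_iff)
    then show "\<exists>c\<in>C. \<exists>d\<in>C. c \<noteq> d \<and> x \<in> closure c \<and> x \<in> closure d" by blast
  qed
  have SC: "\<Union>(closure ` C) = P"
  proof
    show "\<Union>(closure ` C) \<subseteq> P" using cP by blast
    show "P \<subseteq> \<Union>(closure ` C)"
    proof
      fix y assume y: "y \<in> P"
      show "y \<in> \<Union>(closure ` C)"
      proof (cases "y \<in> X")
        case True then show ?thesis using two' by blast
      next
        case False
        then have "y \<in> \<Union>C" using y unfolding C_def by simp
        then show ?thesis using closure_subset by blast
      qed
    qed
  qed
  have lpc: "locally path_connected P"
    using lpc_Union[of C closure] finC homC lpc_disk SC by auto
  have uni: "unicoherent P"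
    using Borsukian_imp_unicoherent simply_connected_imp_Borsukian scP lpc by blast
  have Q: "\<forall>K. K \<subseteq> C \<and> K \<noteq> {} \<and> K \<noteq> C \<and> connected (\<Union>(closure`K)) \<and> connected (\<Union>(closure`(C-K)))
        \<longrightarrow> card (\<Union>(closure`K) \<inter> \<Union>(closure`(C-K))) \<le> 1"
  proof (intro allI impI)
    fix K assume K: "K \<subseteq> C \<and> K \<noteq> {} \<and> K \<noteq> C \<and> connected (\<Union>(closure`K)) \<and> connected (\<Union>(closure`(C-K)))"
    have un: "P = \<Union>(closure`K) \<union> \<Union>(closure`(C-K))" using SC K by blast
    have cl1: "closed (\<Union>(closure`K))" using finC K finite_subset by (intro closed_Union) auto
    have cl2: "closed (\<Union>(closure`(C-K)))" using finC by (intro closed_Union) auto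
    have con: "connected (\<Union>(closure`K) \<inter> \<Union>(closure`(C-K)))"
    proof (rule unicoherentD[OF uni])
      show "closedin (top_of_set P) (\<Union>(closure`K))" using cl1 un closed_subset by blast
      show "closedin (top_of_set P) (\<Union>(closure`(C-K)))" using cl2 un closed_subset by blast
    qed (use K un in auto)
    have sub: "\<Union>(closure`K) \<inter> \<Union>(closure`(C-K)) \<subseteq> X"
    proof
      fix x assume "x \<in> \<Union>(closure`K) \<inter> \<Union>(closure`(C-K))"
      then obtain a b where ab: "a \<in> K" "b \<in> C - K" "x \<in> closure a" "x \<in> closure b" by blast
      then have "a \<noteq> b" by blast
      then show "x \<in> X" using meet ab K by blast
    qed
    then have "finite (\<Union>(closure`K) \<inter> \<Union>(closure`(C-K)))" using finX finite_subset by blast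
    then have "\<Union>(closure`K) \<inter> \<Union>(closure`(C-K)) = {} \<or> (\<exists>a. \<Union>(closure`K) \<inter> \<Union>(closure`(C-K)) = {a})"
      using connected_finite_iff_sing[OF con] by blast
    then show "card (\<Union>(closure`K) \<inter> \<Union>(closure`(C-K))) \<le> 1" by auto
  qed
  have "X \<noteq> {}" using assms(2,3) by auto
  then obtain x0 where "x0 \<in> X" by blast
  then have Cne: "C \<noteq> {}" using two' by blast
  have tc: "card {x\<in>X. \<exists>c\<in>C. \<exists>d\<in>C. c \<noteq> d \<and> x \<in> closure c \<and> x \<in> closure d} + 1 \<le> card C"
    by (rule tree_count[OF finC DC _ Cne meet finX Q]) (use conP SC in simp)
  have "{x\<in>X. \<exists>c\<in>C. \<exists>d\<in>C. c \<noteq> d \<and> x \<in> closure c \<and> x \<in> closure d} = X" using two' by blast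
  then have mn: "m + 1 \<le> card C" using tc assms(2) by simp
  have degsum: "(\<Sum>c\<in>C. card (X \<inter> closure c)) = 2 * m"
  proof -
    have "(\<Sum>c\<in>C. card (X \<inter> closure c)) = (\<Sum>c\<in>C. \<Sum>x\<in>X. if x \<in> closure c then 1 else 0)"
    proof (rule sum.cong[OF refl])
      fix c
      have "card (X \<inter> closure c) = card {x\<in>X. x \<in> closure c}" by (metis Int_def)
      also have "\<dots> = (\<Sum>x\<in>{x\<in>X. x \<in> closure c}. 1)" by simp
      also have "\<dots> = (\<Sum>x\<in>X. if x \<in> closure c then 1 else 0)" using finX by (rule sum.inter_filter)
      finally show "card (X \<inter> closure c) = (\<Sum>x\<in>X. if x \<in> closure c then 1 else 0)" .
    qed
    also have "\<dots> = (\<Sum>x\<in>X. \<Sum>c\<in>C. if x \<in> closure c then 1 else 0)" by (rule sum.swap)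
    also have "\<dots> = (\<Sum>x\<in>X. card {c\<in>C. x \<in> closure c})"
    proof (rule sum.cong[OF refl])
      fix x
      have "(\<Sum>c\<in>C. if x \<in> closure c then 1 else 0) = (\<Sum>c\<in>{c\<in>C. x \<in> closure c}. 1::nat)"
        using finC by (rule sum.inter_filter[symmetric])
      then show "(\<Sum>c\<in>C. if x \<in> closure c then 1 else 0) = card {c\<in>C. x \<in> closure c}" by simp
    qed
    also have "\<dots> = (\<Sum>x\<in>X. 2)" using two by simp
    finally show ?thesis using assms(2) by simp
  qed
  have C2: "card C \<ge> 2" using mn assms(3) by linarith
  have deg1: "\<And>c. c \<in> C \<Longrightarrow> card (X \<inter> closure c) \<ge> 1"
  proof -
    fix c assume c: "c \<in> C"
    have ne2: "C - {c} \<noteq> {}" 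
    proof
      assume "C - {c} = {}"
      then have "C \<subseteq> {c}" by blast
      then have "card C \<le> 1" using card_mono[of "{c}" C] by simp
      then show False using C2 by simp
    qed
    have "closure c \<inter> \<Union>(closure`(C-{c})) \<noteq> {}"
    proof (rule connected_as_closed_union[of P])
      show "connected P" by (rule conP)
      show "P = closure c \<union> \<Union>(closure`(C-{c}))" using SC c by blast
      show "closed (closure c)" by simp
      show "closed (\<Union>(closure`(C-{c})))" using finC by (intro closed_Union) auto
      show "closure c \<noteq> {}" using DC c by blast
      obtain d where d: "d \<in> C - {c}" using ne2 by blast
      then have dC: "d \<in> C" by simp
      have "closure d \<noteq> {}" using DC dC by auto
      then show "\<Union>(closure`(C-{c})) \<noteq> {}" using d by auto
    qed
    then obtain x where x1: "x \<in> closure c" "x \<in> \<Union>(closure`(C-{c}))" by blast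
    then obtain d where xd: "x \<in> closure c" "d \<in> C - {c}" "x \<in> closure d" by blast
    then have "c \<noteq> d" "d \<in> C" by auto
    then have "x \<in> X" using meet c xd by blast
    then have "X \<inter> closure c \<noteq> {}" using xd by blast
    then show "card (X \<inter> closure c) \<ge> 1" using finX by (simp add: Suc_leI card_gt_0_iff)
  qed
  define l where "l c = card (L \<inter> frontier (closure c))" for c
  have each: "\<And>c. c \<in> C \<Longrightarrow> l c + card (X \<inter> closure c) \<ge> 4"
  proof -
    fix c assume c: "c \<in> C"
    have h: "l c mod 2 = card (X \<inter> closure c) mod 2"
        "card (X \<inter> closure c) = 1 \<longrightarrow> l c \<ge> 3" "card (X \<inter> closure c) = 2 \<longrightarrow> l c \<ge> 2"
    proof -
      have cc: "c \<in> components (P - X)" using c C_def by simp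
      have h0: "card (L \<inter> frontier (closure c)) mod 2 = card (X \<inter> closure c) mod 2 \<and>
           (card (X \<inter> closure c) = 1 \<longrightarrow> card (L \<inter> frontier (closure c)) \<ge> 3) \<and>
           (card (X \<inter> closure c) = 2 \<longrightarrow> card (L \<inter> frontier (closure c)) \<ge> 2)"
        using bspec[OF assms(6) cc] .
      then show "l c mod 2 = card (X \<inter> closure c) mod 2"
        "card (X \<inter> closure c) = 1 \<longrightarrow> l c \<ge> 3" "card (X \<inter> closure c) = 2 \<longrightarrow> l c \<ge> 2"
        unfolding l_def by simp_all
    qed
    show "l c + card (X \<inter> closure c) \<ge> 4" using h deg1[OF c] by presburger
  qed
  have "(\<Sum>c\<in>C. l c) + 2 * m = (\<Sum>c\<in>C. l c + card (X \<inter> closure c))"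
    using degsum by (simp add: sum.distrib)
  also have "\<dots> \<ge> (\<Sum>c\<in>C. 4)" using each by (intro sum_mono) auto
  finally have sl: "(\<Sum>c\<in>C. l c) + 2 * m \<ge> 4 * card C" by simp
  have "(\<Sum>c\<in>C. l c) = card (\<Union>c\<in>C. L \<inter> frontier (closure c))"
    unfolding l_def
  proof (rule card_UN_disjoint[symmetric])
    show "finite C" by (rule finC)
    show "\<forall>i\<in>C. finite (L \<inter> frontier (closure i))" using assms(4) by simp
    show "\<forall>i\<in>C. \<forall>j\<in>C. i \<noteq> j \<longrightarrow> L \<inter> frontier (closure i) \<inter> (L \<inter> frontier (closure j)) = {}"
    proof (intro ballI impI)
      fix i j assume ij: "i \<in> C" "j \<in> C" "i \<noteq> j"
      have "frontier (closure i) \<subseteq> closure i" "frontier (closure j) \<subseteq> closure j"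
        by (simp_all add: frontier_subset_closed)
      moreover have "closure i \<inter> closure j \<subseteq> X" using meet ij by blast
      moreover have "closure i \<subseteq> P" using cP ij by blast
      ultimately have "L \<inter> frontier (closure i) \<inter> (L \<inter> frontier (closure j)) \<subseteq> L \<inter> P \<inter> X"
        by blast
      then show "L \<inter> frontier (closure i) \<inter> (L \<inter> frontier (closure j)) = {}" using assms(5) by blast
    qed
  qed
  also have "\<dots> \<le> card (L \<inter> P)"
  proof (rule card_mono)
    show "finite (L \<inter> P)" using assms(4) by simp
    show "(\<Union>c\<in>C. L \<inter> frontier (closure c)) \<subseteq> L \<inter> P"
    proof (rule UN_least)
      fix c assume "c \<in> C"
      then have "closure c \<subseteq> P" by (rule cP)
      moreover have "frontier (closure c) \<subseteq> closure c" by (simp add: frontier_subset_closed)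
      ultimately show "L \<inter> frontier (closure c) \<subseteq> L \<inter> P" by blast
    qed
  qed
  finally show ?thesis using sl mn by linarith
qed


end
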